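(* Let $S$ be a finite set of points in $\mathbb{R}^D$, let $t\geqslant 1$ be a real number, let $G$ be a $t$-spanner for $S$, and let $T$ be a minimum spanning tree of $G$. Let $p$ and $q$ be two points of $S$. Then every edge on the path in $T$ between $p$ and $q$ has length at most $t\cdot d(p,q)$.
   Context: $d(u,v)$ denotes Euclidean distance. For a graph $G$ with vertex set $S\subset\mathbb{R}^D$, each edge $(u,v)$ has weight (length) $d(u,v)$ and $d_G(u,v)$ is the length of a shortest path in $G$ between $u$ and $v$. $G$ is a $t$-spanner for $S$ if its vertex set is $S$ and $d_G(u,v)\leqslant t\cdot d(u,v)$ for all $u,v\in S$. A minimum spanning tree of $G$ is a spanning tree of $G$ (using only edges of $G$) of minimum total edge weight. *)

theory Defs
  imports "HOL-Analysis.Analysis"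
begin

definition ugraph :: "'a set \<Rightarrow> 'a set set \<Rightarrow> bool" where
  "ugraph V E \<longleftrightarrow> (\<forall>e\<in>E. \<exists>u v. e = {u, v} \<and> u \<noteq> v \<and> u \<in> V \<and> v \<in> V)"

text \<open>Length (weight) of an edge: the Euclidean distance of its endpoints.\<close>
definition edge_len :: "'a::euclidean_space set \<Rightarrow> real" where
  "edge_len e = diameter e"

definition weight :: "'a::euclidean_space set set \<Rightarrow> real" where
  "weight E = (\<Sum>e\<in>E. edge_len e)"

definition is_walk :: "'a set set \<Rightarrow> 'a list \<Rightarrow> bool" where
  "is_walk E xs \<longleftrightarrow> xs \<noteq> [] \<and> (\<forall>i. Suc i < length xs \<longrightarrow> {xs ! i, xs ! Suc i} \<in> E)"

definition walk_length :: "'a::euclidean_space list \<Rightarrow> real" where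
  "walk_length xs = (\<Sum>i<length xs - 1. dist (xs ! i) (xs ! Suc i))"

definition is_path :: "'a set set \<Rightarrow> 'a \<Rightarrow> 'a \<Rightarrow> 'a list \<Rightarrow> bool" where
  "is_path E p q xs \<longleftrightarrow> is_walk E xs \<and> distinct xs \<and> hd xs = p \<and> last xs = q"

definition connected_graph :: "'a set \<Rightarrow> 'a set set \<Rightarrow> bool" where
  "connected_graph V E \<longleftrightarrow> (\<forall>u\<in>V. \<forall>v\<in>V. \<exists>xs. is_path E u v xs)"

definition acyclic_graph :: "'a set set \<Rightarrow> bool" where
  "acyclic_graph E \<longleftrightarrow>
     \<not> (\<exists>xs. 3 \<le> length xs \<and> distinct xs \<and> is_walk E xs \<and> {last xs, hd xs} \<in> E)"

definition spanning_tree :: "'a set \<Rightarrow> 'a set set \<Rightarrow> 'a set set \<Rightarrow> bool" where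
  "spanning_tree V E T \<longleftrightarrow> T \<subseteq> E \<and> connected_graph V T \<and> acyclic_graph T"

definition minimum_spanning_tree ::
  "'a::euclidean_space set \<Rightarrow> 'a set set \<Rightarrow> 'a set set \<Rightarrow> bool" where
  "minimum_spanning_tree V E T \<longleftrightarrow> spanning_tree V E T \<and>
     (\<forall>T'. spanning_tree V E T' \<longrightarrow> weight T \<le> weight T')"

definition graph_dist :: "'a::euclidean_space set set \<Rightarrow> 'a \<Rightarrow> 'a \<Rightarrow> real" where
  "graph_dist E u v = Inf {walk_length xs | xs. is_walk E xs \<and> hd xs = u \<and> last xs = v}"

definition t_spanner :: "'a::euclidean_space set \<Rightarrow> 'a set set \<Rightarrow> real \<Rightarrow> bool" where
  "t_spanner S E t \<longleftrightarrow> ugraph S E \<and> connected_graph S E \<and>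
     (\<forall>u\<in>S. \<forall>v\<in>S. graph_dist E u v \<le> t * dist u v)"

end

theory Submission
  imports Defs
begin

definition adj :: "'a set set \<Rightarrow> 'a \<Rightarrow> 'a \<Rightarrow> bool" where
  "adj F x y \<longleftrightarrow> {x, y} \<in> F"

lemma adj_sym: "adj F x y \<Longrightarrow> adj F y x"
  by (simp add: adj_def insert_commute)

lemma rt_sym: "(adj F)\<^sup>*\<^sup>* x y \<Longrightarrow> (adj F)\<^sup>*\<^sup>* y x"
proof (induction rule: rtranclp_induct)
  case base then show ?case by simp
next
  case (step y z) then show ?case
    by (meson adj_sym converse_rtranclp_into_rtranclp)
qed

lemma rt_mono: "F \<subseteq> F' \<Longrightarrow> (adj F)\<^sup>*\<^sup>* x y \<Longrightarrow> (adj F')\<^sup>*\<^sup>* x y"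
  by (metis (no_types, lifting) adj_def mono_rtranclp subsetD)

lemma edge_len_two: "edge_len {u, v} = dist u v"
proof (rule antisym)
  show "edge_len {u, v} \<le> dist u v"
    unfolding edge_len_def
    by (rule diameter_le) (auto simp: dist_norm norm_minus_commute)
  show "dist u v \<le> edge_len {u, v}"
    unfolding edge_len_def
    by (rule diameter_bounded_bound) (auto intro: finite_imp_bounded)
qed

lemma walk_rt:
  assumes "is_walk F ws" "k < length ws"
  shows "(adj F)\<^sup>*\<^sup>* (ws ! 0) (ws ! k)"
  using assms(2)
proof (induction k)
  case 0 then show ?case by simp
next
  case (Suc k)
  then have "adj F (ws ! k) (ws ! Suc k)" using assms(1) by (simp add: is_walk_def adj_def)
  with Suc show ?case by (meson Suc_lessD rtranclp.rtrancl_into_rtrancl)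
qed

lemma walk_rt_hd_last:
  assumes "is_walk F ws"
  shows "(adj F)\<^sup>*\<^sup>* (hd ws) (last ws)"
proof -
  have ne: "ws \<noteq> []" using assms by (simp add: is_walk_def)
  show ?thesis using walk_rt[OF assms, of "length ws - 1"] ne
    by (simp add: hd_conv_nth last_conv_nth)
qed

lemma rt_path:
  assumes "(adj F)\<^sup>*\<^sup>* u v"
  shows "\<exists>xs. is_path F u v xs"
  using assms
proof (induction rule: rtranclp_induct)
  case base
  then show ?case by (rule exI[of _ "[u]"]) (simp add: is_path_def is_walk_def)
next
  case (step x y)
  then obtain xs where xs: "is_path F u x xs" by blast
  then have ne: "xs \<noteq> []" and w: "is_walk F xs" and d: "distinct xs"
     and h: "hd xs = u" and l: "last xs = x"
    by (auto simp: is_path_def is_walk_def)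
  show ?case
  proof (cases "y \<in> set xs")
    case True
    then obtain k where k: "k < length xs" "xs ! k = y" by (meson in_set_conv_nth)
    let ?ys = "take (Suc k) xs"
    have "is_walk F ?ys" using w k unfolding is_walk_def by auto
    moreover have "distinct ?ys" using d by simp
    moreover have "hd ?ys = u" using h ne by (simp add: hd_conv_nth)
    moreover have "last ?ys = y" using k
      by (simp add: last_conv_nth take_Suc_conv_app_nth)
    ultimately show ?thesis unfolding is_path_def by blast
  next
    case False
    let ?ys = "xs @ [y]"
    have "is_walk F ?ys" unfolding is_walk_def
    proof (intro conjI allI impI)
      fix i assume i: "Suc i < length ?ys"
      show "{?ys ! i, ?ys ! Suc i} \<in> F"
      proof (cases "Suc i < length xs")
        case True then show ?thesis using w by (simp add: is_walk_def nth_append)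
      next
        case False
        then have "i = length xs - 1" "Suc i = length xs" using i by auto
        then show ?thesis using step(2) l ne
          by (simp add: nth_append adj_def last_conv_nth)
      qed
    qed simp
    moreover have "distinct ?ys" using d False by simp
    moreover have "hd ?ys = u" using h ne by simp
    moreover have "last ?ys = y" by simp
    ultimately show ?thesis unfolding is_path_def by blast
  qed
qed

lemma path_rt: "is_path F u v xs \<Longrightarrow> (adj F)\<^sup>*\<^sup>* u v"
  using walk_rt_hd_last is_path_def by metis

lemma connected_iff: "connected_graph V F \<longleftrightarrow> (\<forall>u\<in>V. \<forall>v\<in>V. (adj F)\<^sup>*\<^sup>* u v)"
  unfolding connected_graph_def using rt_path path_rt by metis


lemma weight_nonneg_edge: "0 \<le> edge_len e" if "finite e"
  unfolding edge_len_def by (rule diameter_ge_0) (simp add: finite_imp_bounded that)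

lemma cycle_edge_walk:
  assumes "3 \<le> length xs" "distinct xs" "is_walk F xs"
  shows "is_walk (F - {{last xs, hd xs}}) xs"
  unfolding is_walk_def
proof (intro conjI allI impI)
  show "xs \<noteq> []" using assms by auto
  fix k assume k: "Suc k < length xs"
  have "{xs ! k, xs ! Suc k} \<in> F" using assms(3) k by (simp add: is_walk_def)
  moreover have "{xs ! k, xs ! Suc k} \<noteq> {last xs, hd xs}"
  proof
    assume eq: "{xs ! k, xs ! Suc k} = {last xs, hd xs}"
    have ne: "xs \<noteq> []" using assms by auto
    have l: "last xs = xs ! (length xs - 1)" and h: "hd xs = xs ! 0"
      using ne by (auto simp: hd_conv_nth last_conv_nth)
    have inj: "\<And>a b. a < length xs \<Longrightarrow> b < length xs \<Longrightarrow> xs ! a = xs ! b \<Longrightarrow> a = b"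
      using assms(2) nth_eq_iff_index_eq by blast
    from eq have "xs ! k = xs ! (length xs - 1) \<or> xs ! k = xs ! 0" unfolding l h by (simp add: doubleton_eq_iff) blast
    moreover have "xs ! k = xs ! (length xs - 1) \<Longrightarrow> k = length xs - 1"
      using inj[of k "length xs - 1"] k by simp
    moreover have "xs ! k = xs ! 0 \<Longrightarrow> k = 0" using inj[of k 0] k ne by simp
    ultimately have "k = length xs - 1 \<or> k = 0" by blast
    then have k0: "k = 0" using k by auto
    from eq have "xs ! Suc k = xs ! (length xs - 1) \<or> xs ! Suc k = xs ! 0" unfolding l h by (simp add: doubleton_eq_iff) blast
    moreover have "xs ! Suc k = xs ! (length xs - 1) \<Longrightarrow> Suc k = length xs - 1"
      using inj[of "Suc k" "length xs - 1"] k by simp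
    moreover have "xs ! Suc k = xs ! 0 \<Longrightarrow> Suc k = 0" using inj[of "Suc k" 0] k ne by simp
    ultimately have "Suc k = length xs - 1 \<or> Suc k = 0" by blast
    with k0 assms(1) show False by auto
  qed
  ultimately show "{xs ! k, xs ! Suc k} \<in> F - {{last xs, hd xs}}" by simp
qed

lemma extract_tree:
  assumes "finite F" "F \<subseteq> E" "connected_graph V F" "\<forall>e\<in>F. finite e"
  shows "\<exists>T'. spanning_tree V E T' \<and> weight T' \<le> weight F"
  using assms
proof (induction "card F" arbitrary: F rule: less_induct)
  case less
  show ?case
  proof (cases "acyclic_graph F")
    case True
    then show ?thesis using less.prems unfolding spanning_tree_def by auto
  next
    case False
    then obtain xs where xs: "3 \<le> length xs" "distinct xs" "is_walk F xs" "{last xs, hd xs} \<in> F"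
      unfolding acyclic_graph_def by auto
    define g where "g = {last xs, hd xs}"
    define F' where "F' = F - {g}"
    have w': "is_walk F' xs" unfolding F'_def g_def by (rule cycle_edge_walk[OF xs(1-3)])
    have sub: "\<And>x y. adj F x y \<Longrightarrow> (adj F')\<^sup>*\<^sup>* x y"
    proof -
      fix x y assume a: "adj F x y"
      show "(adj F')\<^sup>*\<^sup>* x y"
      proof (cases "{x, y} = g")
        case False then have "adj F' x y" using a by (simp add: adj_def F'_def)
        then show ?thesis by (rule r_into_rtranclp)
      next
        case True
        have r: "(adj F')\<^sup>*\<^sup>* (hd xs) (last xs)" by (rule walk_rt_hd_last[OF w'])
        from True have "(x = last xs \<and> y = hd xs) \<or> (x = hd xs \<and> y = last xs)"
          unfolding g_def by (auto simp: doubleton_eq_iff)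
        then show ?thesis using r rt_sym[OF r] by auto
      qed
    qed
    have "(adj F)\<^sup>*\<^sup>* x y \<Longrightarrow> (adj F')\<^sup>*\<^sup>* x y" for x y
    proof (induction rule: rtranclp_induct)
      case base then show ?case by simp
    next
      case (step y z) then show ?case using sub[of y z] by (rule_tac rtranclp_trans) auto
    qed
    then have conn: "connected_graph V F'" using less.prems(3) unfolding connected_iff by blast
    have gF: "g \<in> F" using xs(4) g_def by simp
    have cardlt: "card F' < card F" unfolding F'_def using gF less.prems(1)
      by (metis card_Diff1_less)
    obtain T' where T': "spanning_tree V E T'" "weight T' \<le> weight F'"
    proof -
      have "finite F'" "F' \<subseteq> E" "\<forall>e\<in>F'. finite e"
        using less.prems unfolding F'_def by auto
      then obtain T' where "spanning_tree V E T' \<and> weight T' \<le> weight F'"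
        using less.hyps[OF cardlt _ _ conn] by presburger
      then show ?thesis using that by auto
    qed
    have "weight F = weight F' + edge_len g"
      unfolding weight_def F'_def using gF less.prems(1) by (simp add: sum.remove)
    moreover have "0 \<le> edge_len g" using gF less.prems(4) weight_nonneg_edge by blast
    ultimately have "weight T' \<le> weight F" using T'(2) by linarith
    then show ?thesis using T'(1) by blast
  qed
qed


lemma walk_mono: "is_walk F xs \<Longrightarrow> F \<subseteq> F' \<Longrightarrow> is_walk F' xs"
  unfolding is_walk_def by blast

lemma crossing:
  assumes "ws \<noteq> []" "P (ws ! 0)" "\<not> P (ws ! (length ws - 1))"
  shows "\<exists>j. Suc j < length ws \<and> P (ws ! j) \<and> \<not> P (ws ! Suc j)"
proof (rule ccontr)
  assume na: "\<not> ?thesis"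
  have "k < length ws \<Longrightarrow> P (ws ! k)" for k
  proof (induction k)
    case 0 then show ?case using assms(2) by simp
  next
    case (Suc k) then show ?case using na by auto
  qed
  then show False using assms by simp
qed

lemma dist_le_walk_length:
  assumes "Suc j < length ws"
  shows "dist (ws ! j) (ws ! Suc j) \<le> walk_length ws"
  unfolding walk_length_def
  by (rule member_le_sum[where f = "\<lambda>i. dist (ws ! i) (ws ! Suc i)"]) (use assms in auto)

lemma prefix_rt:
  assumes "is_walk T xs" "distinct xs" "Suc i < length xs"
  shows "k \<le> i \<Longrightarrow> (adj (T - {{xs ! i, xs ! Suc i}}))\<^sup>*\<^sup>* (xs ! 0) (xs ! k)"
proof (induction k)
  case 0 then show ?case by simp
next
  case (Suc k)
  have inT: "{xs ! k, xs ! Suc k} \<in> T" using assms Suc.prems by (simp add: is_walk_def)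
  have "xs ! k \<noteq> xs ! i" "xs ! k \<noteq> xs ! Suc i"
    using assms Suc.prems by (simp_all add: nth_eq_iff_index_eq)
  then have "{xs ! k, xs ! Suc k} \<noteq> {xs ! i, xs ! Suc i}" by (auto simp: doubleton_eq_iff)
  then have "adj (T - {{xs ! i, xs ! Suc i}}) (xs ! k) (xs ! Suc k)" using inT by (simp add: adj_def)
  then show ?case using Suc by (meson Suc_leD rtranclp.rtrancl_into_rtrancl)
qed

lemma suffix_rt:
  assumes "is_walk T xs" "distinct xs" "Suc i < length xs"
  shows "Suc i + d < length xs \<Longrightarrow> (adj (T - {{xs ! i, xs ! Suc i}}))\<^sup>*\<^sup>* (xs ! Suc i) (xs ! (Suc i + d))"
proof (induction d)
  case 0 then show ?case by simp
next
  case (Suc d)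
  let ?k = "Suc i + d"
  have inT: "{xs ! ?k, xs ! Suc ?k} \<in> T" using assms Suc.prems by (simp add: is_walk_def)
  have "xs ! Suc ?k \<noteq> xs ! i" "xs ! Suc ?k \<noteq> xs ! Suc i"
    using assms Suc.prems by (simp_all add: nth_eq_iff_index_eq)
  then have "{xs ! ?k, xs ! Suc ?k} \<noteq> {xs ! i, xs ! Suc i}" by (auto simp: doubleton_eq_iff)
  then have "adj (T - {{xs ! i, xs ! Suc i}}) (xs ! ?k) (xs ! Suc ?k)" using inT by (simp add: adj_def)
  then show ?case using Suc by (simp add: rtranclp.rtrancl_into_rtrancl)
qed


theorem lemma4:
  fixes S :: "'a::euclidean_space set" and E T :: "'a set set" and t :: real
    and p q :: 'a and xs :: "'a list" and i :: nat
  assumes "finite S" and "t \<ge> 1"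
    and "t_spanner S E t"
    and "minimum_spanning_tree S E T"
    and "p \<in> S" and "q \<in> S"
    and "is_path T p q xs"
    and "Suc i < length xs"
  shows "edge_len {xs ! i, xs ! Suc i} \<le> t * dist p q"
proof -
  note finS = assms(1)
  have ug: "ugraph S E" and connE: "connected_graph S E"
    and gd: "graph_dist E p q \<le> t * dist p q"
    using assms(3) assms(5) assms(6) unfolding t_spanner_def by blast+
  have TE: "T \<subseteq> E" and connT: "connected_graph S T" and acyc: "acyclic_graph T"
    and mst: "\<And>T'. spanning_tree S E T' \<Longrightarrow> weight T \<le> weight T'"
    using assms(4) unfolding minimum_spanning_tree_def spanning_tree_def by blast+
  have Esub: "f \<subseteq> S" if "f \<in> E" for f
  proof -
    have "\<exists>u v. f = {u, v} \<and> u \<noteq> v \<and> u \<in> S \<and> v \<in> S"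
      using ug that unfolding ugraph_def by (rule bspec)
    then obtain u v where "f = {u, v}" "u \<in> S" "v \<in> S" by auto
    then show ?thesis by simp
  qed
  have "E \<subseteq> Pow S" using Esub by blast
  then have finE: "finite E" using finite_subset[of E "Pow S"] finS by simp
  have fin_edges: "finite f" if "f \<in> E" for f using finite_subset[OF Esub[OF that] finS] .
  have finT: "finite T" using finite_subset[OF TE finE] .
  have wT: "is_walk T xs" and dT: "distinct xs" and hT: "hd xs = p" and lT: "last xs = q"
    using assms(7) unfolding is_path_def by auto
  have ne: "xs \<noteq> []" using wT by (simp add: is_walk_def)
  have h0: "xs ! 0 = p" using hT ne by (simp add: hd_conv_nth)
  have l0: "xs ! (length xs - 1) = q" using lT ne by (simp add: last_conv_nth)
  define a where "a = xs ! i"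
  define b where "b = xs ! Suc i"
  define e where "e = {a, b}"
  define T' where "T' = T - {e}"
  have eT: "e \<in> T" using wT assms(8) unfolding e_def a_def b_def is_walk_def by blast
  have ab: "a \<noteq> b" using dT assms(8) unfolding a_def b_def by (simp add: nth_eq_iff_index_eq)
  have aS: "a \<in> S" using Esub eT TE unfolding e_def by blast
  have pa: "(adj T')\<^sup>*\<^sup>* p a"
    using prefix_rt[OF wT dT assms(8), of i] h0 unfolding T'_def e_def a_def b_def by simp
  have bq: "(adj T')\<^sup>*\<^sup>* b q"
  proof -
    have "Suc i + (length xs - 1 - Suc i) = length xs - 1" using assms(8) by simp
    then show ?thesis
      using suffix_rt[OF wT dT assms(8), of "length xs - 1 - Suc i"] l0 assms(8)
      unfolding T'_def e_def a_def b_def by simp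
  qed
  have nab: "\<not> (adj T')\<^sup>*\<^sup>* a b"
  proof
    assume "(adj T')\<^sup>*\<^sup>* a b"
    from rt_path[OF this] obtain ys where ys: "is_path T' a b ys" by (elim exE)
    then have wys: "is_walk T' ys" and dys: "distinct ys" and hys: "hd ys = a" and lys: "last ys = b"
      unfolding is_path_def by auto
    have yne: "ys \<noteq> []" using wys by (simp add: is_walk_def)
    have "length ys \<noteq> 1"
    proof
      assume "length ys = 1"
      then show False using hys lys ab yne by (simp add: hd_conv_nth last_conv_nth)
    qed
    moreover have "length ys \<noteq> 2"
    proof
      assume l2: "length ys = 2"
      then have "{ys ! 0, ys ! 1} \<in> T'" using wys unfolding is_walk_def by auto
      moreover have "ys ! 0 = a" "ys ! 1 = b" using hys lys yne l2
        by (auto simp: hd_conv_nth last_conv_nth)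
      ultimately show False unfolding T'_def e_def by simp
    qed
    moreover have "length ys \<noteq> 0" using yne by simp
    ultimately have l3: "3 \<le> length ys" by linarith
    have "T' \<subseteq> T" unfolding T'_def by (rule Diff_subset)
    then have "is_walk T ys" by (rule walk_mono[OF wys])
    moreover have "{last ys, hd ys} \<in> T" using eT hys lys unfolding e_def by (simp add: insert_commute)
    ultimately have "3 \<le> length ys \<and> distinct ys \<and> is_walk T ys \<and> {last ys, hd ys} \<in> T"
      using l3 dys by simp
    with acyc show False unfolding acyclic_graph_def by blast
  qed
  have side: "(adj T')\<^sup>*\<^sup>* a v \<or> (adj T')\<^sup>*\<^sup>* b v" if "v \<in> S" for v
  proof -
    have "\<forall>u\<in>S. \<forall>v\<in>S. (adj T)\<^sup>*\<^sup>* u v" using connT by (simp only: connected_iff)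
    then have "(adj T)\<^sup>*\<^sup>* a v" using aS that by (metis (no_types))
    then show ?thesis
    proof (induction rule: rtranclp_induct)
      case base then show ?case by simp
    next
      case (step y z)
      show ?case
      proof (cases "{y, z} = e")
        case True
        then have "z = a \<or> z = b" unfolding e_def by (auto simp: doubleton_eq_iff)
        then show ?thesis by auto
      next
        case False
        then have "adj T' y z" using step(2) unfolding T'_def adj_def by simp
        then show ?thesis using step(3) by (meson rtranclp.rtrancl_into_rtrancl)
      qed
    qed
  qed
  have key: "edge_len e \<le> walk_length ws"
    if ws: "is_walk E ws" "hd ws = p" "last ws = q" for ws
  proof -
    have wne: "ws \<noteq> []" using ws(1) by (simp add: is_walk_def)
    let ?R = "\<lambda>x. (adj T')\<^sup>*\<^sup>* a x"
    have "?R (ws ! 0)" using ws(2) wne pa rt_sym by (simp add: hd_conv_nth)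
    moreover have "\<not> ?R (ws ! (length ws - 1))"
    proof
      assume "?R (ws ! (length ws - 1))"
      then have "?R q" using ws(3) wne by (simp add: last_conv_nth)
      then have "(adj T')\<^sup>*\<^sup>* a b" using rt_sym[OF bq] by (rule rtranclp_trans)
      then show False using nab by simp
    qed
    ultimately have "\<exists>j. Suc j < length ws \<and> ?R (ws ! j) \<and> \<not> ?R (ws ! Suc j)"
      by (rule crossing[OF wne, where P = ?R])
    then obtain j where j: "Suc j < length ws" "?R (ws ! j)" "\<not> ?R (ws ! Suc j)"
      by (elim exE conjE)
    define c where "c = ws ! j"
    define d where "d = ws ! Suc j"
    define f where "f = {c, d}"
    have fE: "f \<in> E" using ws(1) j(1) unfolding f_def c_def d_def is_walk_def by blast
    have dS: "d \<in> S" using Esub fE unfolding f_def by blast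
    have bd: "(adj T')\<^sup>*\<^sup>* b d" using side[OF dS] j(3) unfolding d_def by (metis (no_types))
    define H where "H = insert f T'"
    have HE: "H \<subseteq> E" using fE TE unfolding H_def T'_def by blast
    have finH: "finite H" using finite_subset[OF HE finE] .
    have finHe: "\<forall>g\<in>H. finite g" using HE fin_edges by blast
    have T'H: "T' \<subseteq> H" unfolding H_def by blast
    have abH: "(adj H)\<^sup>*\<^sup>* a b"
    proof -
      have "(adj H)\<^sup>*\<^sup>* a c" unfolding c_def by (rule rt_mono[OF T'H j(2)])
      moreover have "adj H c d" unfolding H_def f_def adj_def by simp
      moreover have "(adj H)\<^sup>*\<^sup>* d b" using rt_mono[OF T'H rt_sym[OF bd]] .
      ultimately show ?thesis by (meson rtranclp.rtrancl_into_rtrancl rtranclp_trans)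
    qed
    have edgeH: "(adj H)\<^sup>*\<^sup>* x y" if "adj T x y" for x y
    proof (cases "{x, y} = e")
      case True
      then have "(x = a \<and> y = b) \<or> (x = b \<and> y = a)" unfolding e_def by (auto simp: doubleton_eq_iff)
      then show ?thesis using abH rt_sym[OF abH] by auto
    next
      case False
      then have "adj H x y" using that unfolding H_def T'_def adj_def by simp
      then show ?thesis by (rule r_into_rtranclp)
    qed
    have "(adj T)\<^sup>*\<^sup>* x y \<Longrightarrow> (adj H)\<^sup>*\<^sup>* x y" for x y
    proof (induction rule: rtranclp_induct)
      case base then show ?case by simp
    next
      case (step y z) then show ?case using edgeH[of y z] by (rule_tac rtranclp_trans) auto
    qed
    then have connH: "connected_graph S H" using connT unfolding connected_iff by (metis (no_types))
    obtain T'' where T'': "spanning_tree S E T''" "weight T'' \<le> weight H"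
      using extract_tree[OF finH HE connH finHe] by blast
    have wTT: "weight T \<le> weight H" using mst[OF T''(1)] T''(2) by linarith
    have finT': "finite T'" using finT unfolding T'_def by simp
    have f0: "0 \<le> edge_len f" using fin_edges[OF fE] by (rule weight_nonneg_edge)
    have "weight H \<le> weight T' + edge_len f"
    proof (cases "f \<in> T'")
      case True then show ?thesis using f0 unfolding H_def by (simp add: insert_absorb)
    next
      case False then show ?thesis using finT' unfolding H_def weight_def by simp
    qed
    moreover have "weight T = weight T' + edge_len e"
      unfolding weight_def T'_def using eT finT by (simp add: sum.remove)
    ultimately have "edge_len e \<le> edge_len f" using wTT by linarith
    also have "edge_len f = dist c d" unfolding f_def by (rule edge_len_two)
    also have "\<dots> \<le> walk_length ws" unfolding c_def d_def by (rule dist_le_walk_length[OF j(1)])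
    finally show ?thesis .
  qed
  have "edge_len e \<le> graph_dist E p q"
    unfolding graph_dist_def
  proof (rule cInf_greatest)
    obtain zs where "is_path E p q zs" using connE assms(5,6) unfolding connected_graph_def by blast
    then show "{walk_length xs |xs. is_walk E xs \<and> hd xs = p \<and> last xs = q} \<noteq> {}"
      unfolding is_path_def by blast
  next
    fix w assume "w \<in> {walk_length xs |xs. is_walk E xs \<and> hd xs = p \<and> last xs = q}"
    then show "edge_len e \<le> w" using key by blast
  qed
  then show ?thesis using gd unfolding e_def a_def b_def by linarith
qed

end
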